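(* Let $X \subset Y \subset \mathbb{R}^{n}$ be finite sets, let $r>0$, and suppose that $X$ is $r$-dense in $Y$. Let $0 = s_{0} < s_{1} < \dots < s_{m}$ be the phase-change numbers of $Y$, and let $0 \le i < m$ be such that $2r < s_{i+1} - s_{i}$. Then the inclusion $i: V_{s_{i}}(X) \to V_{s_{i}}(Y)$ is a weak homotopy equivalence (its geometric realization is a homotopy equivalence).
   Context: $\mathbb{R}^n$ carries the Euclidean metric $d$. For subsets $A \subset B$ of a metric space and $r>0$, $A$ is $r$-dense in $B$ if for every $b \in B$ there is an $a \in A$ with $d(a,b) < r$. For a finite set $X \subset \mathbb{R}^n$ and $s \geq 0$, $V_{s}(X)$ denotes the Vietoris–Rips complex: the simplicial complex with vertex set $X$ whose simplices are the nonempty subsets $\{x_{0}, \dots, x_{p}\}$ of $X$ with $d(x_{i},x_{j}) \leq s$ for all $i,j$. For $X \subset Y$, $i: V_{s}(X) \to V_{s}(Y)$ denotes the induced inclusion. The phase-change numbers of a finite set $Y$ are the distinct values of $d(y,y')$ for $y,y' \in Y$, listed in increasing order $0 = s_{0} < s_{1} < \dots < s_{m}$. *)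

theory Defs
  imports "HOL-Analysis.Analysis"
begin

definition r_dense :: "real \<Rightarrow> 'a::metric_space set \<Rightarrow> 'a set \<Rightarrow> bool" where
  "r_dense r A B \<longleftrightarrow> (\<forall>b\<in>B. \<exists>a\<in>A. dist a b < r)"

definition vietoris_rips :: "real \<Rightarrow> 'a::metric_space set \<Rightarrow> 'a set set" where
  "vietoris_rips s X = {\<sigma>. \<sigma> \<noteq> {} \<and> \<sigma> \<subseteq> X \<and> finite \<sigma> \<and> (\<forall>x\<in>\<sigma>. \<forall>y\<in>\<sigma>. dist x y \<le> s)}"

text \<open>Geometric realization of a simplicial complex K (given by its simplices, vertices of
  type 'a): points are barycentric coordinate functions 'a => real, nonnegative, summing to 1,
  whose support is a simplex of K. Topology: product topology on 'a => real (for a finite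
  vertex set this is the standard topology of the realization).\<close>
definition geom_real :: "'a set set \<Rightarrow> ('a \<Rightarrow> real) set" where
  "geom_real K = {f. (\<forall>v. 0 \<le> f v) \<and> {v. f v \<noteq> 0} \<in> K \<and> sum f {v. f v \<noteq> 0} = 1}"

definition pc_dists :: "'a::metric_space set \<Rightarrow> real set" where
  "pc_dists Y = {dist y y' | y y'. y \<in> Y \<and> y' \<in> Y}"

definition phase_change :: "'a::metric_space set \<Rightarrow> nat \<Rightarrow> real" where
  "phase_change Y i = sorted_list_of_set (pc_dists Y) ! i"

definition pc_max_index :: "'a::metric_space set \<Rightarrow> nat" where
  "pc_max_index Y = card (pc_dists Y) - 1"

definition homotopy_equivalence_map ::
  "('a::topological_space) set \<Rightarrow> ('b::topological_space) set \<Rightarrow> ('a \<Rightarrow> 'b) \<Rightarrow> bool" where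
  "homotopy_equivalence_map S T f \<longleftrightarrow>
     continuous_on S f \<and> f ` S \<subseteq> T \<and>
     (\<exists>g. continuous_on T g \<and> g ` T \<subseteq> S \<and>
          homotopic_with_canon (\<lambda>_. True) S S (g \<circ> f) id \<and>
          homotopic_with_canon (\<lambda>_. True) T T (f \<circ> g) id)"

end

theory Submission
  imports Defs
begin

lemma sum_supp:
  fixes f :: "'a \<Rightarrow> real"
  assumes "finite A" "{v. f v \<noteq> 0} \<subseteq> A"
  shows "sum f {v. f v \<noteq> 0} = sum f A"
  by (rule sum.mono_neutral_left) (use assms in \<open>auto intro: finite_subset\<close>)

lemma pc_key:
  fixes Y :: "'a::metric_space set"
  assumes "finite Y" "i < pc_max_index Y" "a \<in> Y" "b \<in> Y"
    "dist a b < phase_change Y (Suc i)"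
  shows "dist a b \<le> phase_change Y i"
proof -
  let ?D = "pc_dists Y"
  have D: "?D = (\<lambda>(a,b). dist a b) ` (Y \<times> Y)" unfolding pc_dists_def by auto
  have fin: "finite ?D" unfolding D using assms(1) by auto
  define L where "L = sorted_list_of_set ?D"
  have len: "length L = card ?D" unfolding L_def by simp
  have si: "Suc i < length L" using assms(2) len unfolding pc_max_index_def by linarith
  have sorted: "sorted L" unfolding L_def by simp
  have "dist a b \<in> set L" unfolding L_def using fin assms(3,4) by (auto simp: pc_dists_def)
  then obtain j where j: "j < length L" "L ! j = dist a b" by (auto simp: in_set_conv_nth)
  show ?thesis
  proof (cases "j \<le> i")
    case True
    then show ?thesis using sorted_nth_mono[OF sorted True] si j
      unfolding phase_change_def L_def[symmetric] by simp
  next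
    case False
    then have "L ! Suc i \<le> L ! j" using sorted_nth_mono[OF sorted, of "Suc i" j] j by simp
    then show ?thesis using assms(5) j unfolding phase_change_def L_def[symmetric] by simp
  qed
qed

theorem corollary2:
  fixes X Y :: "(real ^ 'n) set" and r :: real and i :: nat
  assumes "finite Y" and "X \<subseteq> Y" and "r > 0"
    and "r_dense r X Y"
    and "i < pc_max_index Y"
    and "2 * r < phase_change Y (Suc i) - phase_change Y i"
  shows "homotopy_equivalence_map
           (geom_real (vietoris_rips (phase_change Y i) X))
           (geom_real (vietoris_rips (phase_change Y i) Y))
           (\<lambda>f. f)"
proof -
  define s where "s = phase_change Y i"
  define s' where "s' = phase_change Y (Suc i)"
  have key: "\<And>a b. a \<in> Y \<Longrightarrow> b \<in> Y \<Longrightarrow> dist a b < s' \<Longrightarrow> dist a b \<le> s"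
    using pc_key[OF assms(1) assms(5)] unfolding s_def s'_def by blast
  have gap: "s + 2 * r < s'" using assms(6) unfolding s_def s'_def by linarith
  have "\<forall>y\<in>Y. \<exists>x. x \<in> X \<and> dist x y < r \<and> (y \<in> X \<longrightarrow> x = y)"
  proof
    fix y assume y: "y \<in> Y"
    show "\<exists>x. x \<in> X \<and> dist x y < r \<and> (y \<in> X \<longrightarrow> x = y)"
    proof (cases "y \<in> X")
      case True then show ?thesis using assms(3) by auto
    next
      case False then show ?thesis using assms(4) y unfolding r_dense_def by auto
    qed
  qed
  then obtain p where p: "\<And>y. y \<in> Y \<Longrightarrow> p y \<in> X \<and> dist (p y) y < r \<and> (y \<in> X \<longrightarrow> p y = y)"
    by metis
  have pY: "\<And>y. y \<in> Y \<Longrightarrow> p y \<in> Y" using p assms(2) by blast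
  have clos: "\<forall>a\<in>F \<union> p ` F. \<forall>b\<in>F \<union> p ` F. dist a b \<le> s"
    if F: "F \<subseteq> Y" "\<forall>a\<in>F. \<forall>b\<in>F. dist a b \<le> s" for F
  proof (intro ballI)
    fix a b assume a: "a \<in> F \<union> p ` F" and b: "b \<in> F \<union> p ` F"
    have inY: "a \<in> Y" "b \<in> Y" using a b F pY by auto
    have "dist a b < s'"
    proof -
      from a obtain a0 where a0: "a0 \<in> F" "dist a a0 < r \<or> a = a0"
        by (auto, metis dist_commute p subsetD F(1))
      from b obtain b0 where b0: "b0 \<in> F" "dist b b0 < r \<or> b = b0"
        by (auto, metis dist_commute p subsetD F(1))
      have "dist a b \<le> dist a a0 + dist a0 b0 + dist b0 b"
        using dist_triangle[of a b a0] dist_triangle[of a0 b b0] by linarith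
      moreover have "dist a a0 < r" "dist b0 b < r" using a0 b0 assms(3) by (auto simp: dist_commute)
      moreover have "dist a0 b0 \<le> s" using F a0 b0 by auto
      ultimately show ?thesis using gap by linarith
    qed
    then show "dist a b \<le> s" using key inY by blast
  qed
  define g where "g = (\<lambda>(f :: real^'n \<Rightarrow> real) v. \<Sum>y\<in>{y\<in>Y. p y = v}. f y)"
  define S where "S = geom_real (vietoris_rips s X)"
  define T where "T = geom_real (vietoris_rips s Y)"
  have ST: "S \<subseteq> T" unfolding S_def T_def geom_real_def vietoris_rips_def using assms(2) by auto
  have Tprops: "(\<forall>v. 0 \<le> f v) \<and> {v. f v \<noteq> 0} \<noteq> {} \<and> {v. f v \<noteq> 0} \<subseteq> Y \<and>
      (\<forall>a\<in>{v. f v \<noteq> 0}. \<forall>b\<in>{v. f v \<noteq> 0}. dist a b \<le> s) \<and> sum f Y = 1" if "f \<in> T" for f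
  proof -
    have *: "(\<forall>v. 0 \<le> f v)" "{v. f v \<noteq> 0} \<noteq> {}" "{v. f v \<noteq> 0} \<subseteq> Y"
      "(\<forall>a\<in>{v. f v \<noteq> 0}. \<forall>b\<in>{v. f v \<noteq> 0}. dist a b \<le> s)" "sum f {v. f v \<noteq> 0} = 1"
      using that unfolding T_def geom_real_def vietoris_rips_def by auto
    then show ?thesis using sum_supp[OF assms(1) *(3)] by simp
  qed
  have gnn: "\<And>f v. (\<forall>v. 0 \<le> f v) \<Longrightarrow> 0 \<le> g f v" unfolding g_def by (simp add: sum_nonneg)
  have gsupp: "{v. g f v \<noteq> 0} = p ` {v. f v \<noteq> 0}" if "f \<in> T" for f
  proof -
    have nn: "\<forall>v. 0 \<le> f v" and sY: "{v. f v \<noteq> 0} \<subseteq> Y" using Tprops[OF that] by auto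
    have "g f v \<noteq> 0 \<longleftrightarrow> (\<exists>y\<in>Y. p y = v \<and> f y \<noteq> 0)" for v
      unfolding g_def using sum_nonneg_eq_0_iff[of "{y\<in>Y. p y = v}" f] assms(1) nn by auto
    then show ?thesis using sY by auto
  qed
  have gsum: "sum (g f) (p ` Y) = 1" if "f \<in> T" for f
    unfolding g_def using sum.group[OF assms(1) finite_imageI[OF assms(1)], where g=p and h=f] Tprops[OF that]
    by simp
  have g_S: "g f \<in> S" if "f \<in> T" for f
  proof -
    note tp = Tprops[OF that]
    have sub: "{v. g f v \<noteq> 0} \<subseteq> p ` Y" using gsupp[OF that] tp by auto
    have "sum (g f) {v. g f v \<noteq> 0} = 1"
      using sum_supp[OF finite_imageI[OF assms(1)] sub] gsum[OF that] by simp
    moreover have "{v. g f v \<noteq> 0} \<in> vietoris_rips s X"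
    proof -
      let ?F = "{v. f v \<noteq> 0}"
      have fF: "finite ?F" using finite_subset[OF _ assms(1)] tp by blast
      have cA: "\<forall>a\<in>?F \<union> p ` ?F. \<forall>b\<in>?F \<union> p ` ?F. dist a b \<le> s"
        by (rule clos) (use tp in auto)
      have pF: "\<forall>a\<in>p ` ?F. \<forall>b\<in>p ` ?F. dist a b \<le> s" using cA by blast
      have XF: "p ` ?F \<subseteq> X" using tp p by blast
      have nF: "p ` ?F \<noteq> {}" using tp by blast
      show ?thesis unfolding vietoris_rips_def gsupp[OF that]
        using fF pF XF nF by blast
    qed
    ultimately show ?thesis unfolding S_def geom_real_def using gnn tp by auto
  qed
  have g_id: "g f = f" if "f \<in> S" for f
  proof
    fix v
    have sX: "{v. f v \<noteq> 0} \<subseteq> X" using that unfolding S_def geom_real_def vietoris_rips_def by auto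
    have "g f v = sum f ({y\<in>Y. p y = v} \<inter> X)"
      unfolding g_def by (rule sum.mono_neutral_right) (use assms(1) sX in auto)
    also have "{y\<in>Y. p y = v} \<inter> X = {v} \<inter> X" using p assms(2) by auto
    finally show "g f v = f v" using sX by (cases "v \<in> X") auto
  qed
  define H where "H = (\<lambda>(t::real, f :: real^'n \<Rightarrow> real). \<lambda>v. t * f v + (1 - t) * g f v)"
  have H_T: "H (t, f) \<in> T" if "f \<in> T" "t \<in> {0..1}" for t f
  proof -
    note tp = Tprops[OF that(1)]
    let ?F = "{v. f v \<noteq> 0}"
    let ?A = "?F \<union> p ` ?F"
    have finF: "finite ?F" using tp finite_subset[OF _ assms(1)] by auto
    have finA: "finite ?A" using finF by auto
    have AY: "?A \<subseteq> Y" using tp pY by auto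
    have suppH: "{v. H (t,f) v \<noteq> 0} \<subseteq> ?A" using gsupp[OF that(1)] unfolding H_def by auto
    have sf: "sum f ?A = 1" using sum_supp[OF finA, of f] tp sum_supp[OF assms(1), of f] by auto
    have sg: "sum (g f) ?A = 1"
    proof -
      have a: "{v. g f v \<noteq> 0} \<subseteq> ?A" using gsupp[OF that(1)] by auto
      have b: "{v. g f v \<noteq> 0} \<subseteq> p ` Y" using gsupp[OF that(1)] tp by auto
      show ?thesis using sum_supp[OF finA a] sum_supp[OF finite_imageI[OF assms(1)] b] gsum[OF that(1)]
        by simp
    qed
    have sH: "sum (H (t,f)) ?A = 1"
      unfolding H_def using sf sg by (simp add: sum.distrib sum_distrib_left[symmetric])
    have sH': "sum (H (t,f)) {v. H (t,f) v \<noteq> 0} = 1" using sum_supp[OF finA suppH] sH by simp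
    have ne: "{v. H (t,f) v \<noteq> 0} \<noteq> {}" 
    proof
      assume e: "{v. H (t,f) v \<noteq> 0} = {}"
      from sH' have "sum (H (t,f)) {} = 1" by (simp only: e)
      then show False by (simp only: sum.empty zero_neq_one)
    qed
    have nn: "\<forall>v. 0 \<le> H (t,f) v" unfolding H_def using that(2) tp gnn by auto
    have "{v. H (t,f) v \<noteq> 0} \<in> vietoris_rips s Y"
    proof -
      have fS: "finite {v. H (t,f) v \<noteq> 0}" using finite_subset[OF suppH finA] .
      have cA: "\<forall>a\<in>?A. \<forall>b\<in>?A. dist a b \<le> s"
        by (rule clos) (use tp in auto)
      have pr: "\<forall>a\<in>{v. H (t,f) v \<noteq> 0}. \<forall>b\<in>{v. H (t,f) v \<noteq> 0}. dist a b \<le> s"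
        using cA suppH by blast
      have sY: "{v. H (t,f) v \<noteq> 0} \<subseteq> Y" using suppH AY by blast
      show ?thesis unfolding vietoris_rips_def using fS pr sY ne by blast
    qed
    then show ?thesis unfolding T_def geom_real_def using nn sH' by auto
  qed
  have coord: "continuous_on A (\<lambda>f :: real^'n \<Rightarrow> real. f y)" for A y
    by (rule continuous_on_subset[OF continuous_on_product_coordinates]) simp
  have contg: "continuous_on A g" for A
    unfolding g_def by (intro continuous_on_coordinatewise_then_product continuous_on_sum coord)
  have contH: "continuous_on ({0..1} \<times> T) H"
  proof -
    have c2: "continuous_on A (\<lambda>z :: real \<times> (real^'n \<Rightarrow> real). snd z y)" for A y
      by (rule continuous_on_compose2[OF coord[of UNIV y] continuous_on_snd[OF continuous_on_id]]) simp
    have c3: "continuous_on A (\<lambda>z :: real \<times> (real^'n \<Rightarrow> real). g (snd z) y)" for A y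
      unfolding g_def by (intro continuous_on_sum c2)
    show ?thesis unfolding H_def case_prod_beta
      by (intro continuous_on_coordinatewise_then_product continuous_intros c2 c3)
  qed
  have hom2: "homotopic_with_canon (\<lambda>_. True) T T ((\<lambda>f. f) \<circ> g) id"
    unfolding homotopic_with_def
    apply (rule exI[of _ H])
    using contH H_T by (auto simp: H_def)
  have hom1: "homotopic_with_canon (\<lambda>_. True) S S (g \<circ> (\<lambda>f. f)) id"
    by (rule homotopic_with_equal) (auto simp: g_id)
  show ?thesis
    unfolding homotopy_equivalence_map_def s_def[symmetric] S_def[symmetric] T_def[symmetric]
    using ST contg g_S hom1 hom2 by (auto intro!: exI[of _ g] continuous_on_id)
qed

end
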